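(* Let $G$ be a directed graph on $n$ vertices and let $u,v,x$ be vertices of $G$ such that the arc $\overrightarrow{uv}$ is not in $G$. Assume that adding the arc $\overrightarrow{uv}$ to $G$ decreases the cost of $u$ by $s$, where $s>n\operatorname{dist}(x,u)$. Then adding the arc $\overrightarrow{xv}$ to $G$ decreases the cost of $x$ by at least $s-n\operatorname{dist}(x,u)$.
   Context: For a directed graph $G$ on $n$ vertices, $U(G)$ is the undirected multigraph obtained by ignoring arc directions, and $\operatorname{dist}(a,b)$ is the distance between $a$ and $b$ in $U(G)$, defined to be $n^2$ if $a$ and $b$ lie in different connected components. The cost of a vertex $a$ is $c(a)=\sum_{w}\operatorname{dist}(a,w)$ (sum over all vertices $w$ of $G$). *)

theory Defs
  imports Main
begin

definition digraph :: "'a set \<Rightarrow> ('a \<times> 'a) set \<Rightarrow> bool" where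
  "digraph V A \<longleftrightarrow> finite V \<and> A \<subseteq> V \<times> V"

definition und_adj :: "('a \<times> 'a) set \<Rightarrow> ('a \<times> 'a) set" where
  "und_adj A = A \<union> A\<inverse>"

text \<open>Distance in U(G): length of a shortest walk, or n^2 if no walk exists.\<close>
definition gdist :: "'a set \<Rightarrow> ('a \<times> 'a) set \<Rightarrow> 'a \<Rightarrow> 'a \<Rightarrow> nat" where
  "gdist V A a b = (if \<exists>k. (a, b) \<in> und_adj A ^^ k
                    then (LEAST k. (a, b) \<in> und_adj A ^^ k)
                    else (card V)\<^sup>2)"

definition cost :: "'a set \<Rightarrow> ('a \<times> 'a) set \<Rightarrow> 'a \<Rightarrow> nat" where
  "cost V A a = (\<Sum>w\<in>V. gdist V A a w)"

end

theory Submission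
  imports Defs
begin

lemma rp_mono: "(R::('a\<times>'a) set) \<subseteq> S \<Longrightarrow> (a,b) \<in> R ^^ k \<Longrightarrow> (a,b) \<in> S ^^ k"
proof (induction k arbitrary: a)
  case 0 then show ?case by auto
next
  case (Suc k)
  from Suc.prems(2) obtain y where "(a,y) \<in> R" "(y,b) \<in> R ^^ k" by (rule relpow_Suc_E2)
  then show ?case using Suc by (meson relpow_Suc_I2 subsetD)
qed

lemma rp_sym: "sym R \<Longrightarrow> (a,b) \<in> R ^^ k \<Longrightarrow> (b,a) \<in> R ^^ k"
proof (induction k arbitrary: a)
  case 0 then show ?case by auto
next
  case (Suc k)
  from Suc.prems(2) obtain y where "(a,y) \<in> R" "(y,b) \<in> R ^^ k" by (rule relpow_Suc_E2)
  then have "(b,y) \<in> R ^^ k" "(y,a) \<in> R" using Suc by (auto dest: symD)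
  then show ?case by auto
qed

lemma rp_comp: "(a,b) \<in> R ^^ i \<Longrightarrow> (b,c) \<in> R ^^ j \<Longrightarrow> (a,c) \<in> R ^^ (i+j)"
  by (auto simp: relpow_add)

lemma walk_split:
  "(a,w) \<in> insert (u,v) (insert (v,u) R) ^^ k \<Longrightarrow>
   (\<exists>j\<le>k. (a,w) \<in> R ^^ j) \<or> (\<exists>j<k. (v,w) \<in> R ^^ j) \<or> (\<exists>j<k. (u,w) \<in> R ^^ j)"
proof (induction k arbitrary: a)
  case 0 then show ?case by auto
next
  case (Suc k)
  from Suc.prems obtain y where y: "(a,y) \<in> insert (u,v) (insert (v,u) R)"
    "(y,w) \<in> insert (u,v) (insert (v,u) R) ^^ k" by (rule relpow_Suc_E2)
  from Suc.IH[OF y(2)] show ?case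
  proof (elim disjE exE conjE)
    fix j assume j: "j \<le> k" "(y,w) \<in> R ^^ j"
    show ?thesis
    proof (cases "(a,y) \<in> R")
      case True then have "(a,w) \<in> R ^^ Suc j" using j relpow_Suc_I2 by metis
      then show ?thesis using j by (intro disjI1 exI[of _ "Suc j"]) auto
    next
      case False then have "(a,y) = (u,v) \<or> (a,y) = (v,u)" using y by auto
      then show ?thesis using j by (metis less_Suc_eq_le prod.inject)
    qed
  qed (auto intro: less_SucI)
qed

context
  fixes V :: "'a set" and A :: "('a \<times> 'a) set"
begin

lemma gd_le: "(a,b) \<in> und_adj A ^^ k \<Longrightarrow> gdist V A a b \<le> k"
  unfolding gdist_def by (auto intro: Least_le)

lemma gd_reach: "(a,b) \<in> und_adj A ^^ k \<Longrightarrow> (a,b) \<in> und_adj A ^^ gdist V A a b"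
  unfolding gdist_def by (auto intro: LeastI)

lemma gd_unreach: "\<not> (\<exists>k. (a,b) \<in> und_adj A ^^ k) \<Longrightarrow> gdist V A a b = (card V)^2"
  unfolding gdist_def by auto

lemma gd_bound:
  assumes "finite V" "A \<subseteq> V \<times> V"
  shows "gdist V A a b \<le> (card V)^2"
proof (cases "\<exists>k. (a,b) \<in> und_adj A ^^ k")
  case True
  then obtain k where k: "(a,b) \<in> und_adj A ^^ k" by auto
  have sub: "und_adj A \<subseteq> V \<times> V" using assms(2) unfolding und_adj_def by auto
  have fin: "finite (und_adj A)" using sub assms(1) finite_subset by blast
  have cd: "card (und_adj A) \<le> (card V)^2"
    using card_mono[OF _ sub] assms(1) by (simp add: card_cartesian_product power2_eq_square)
  from relpow_finite_bounded[OF fin, of k] k obtain m where "m \<le> card (und_adj A)"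
    "(a,b) \<in> und_adj A ^^ m" by auto
  then show ?thesis using gd_le cd by (meson le_trans)
qed (simp add: gd_unreach)

end

lemma und_ins: "und_adj (insert (p,q) A) = insert (p,q) (insert (q,p) (und_adj A))"
  unfolding und_adj_def by auto

lemma sym_und: "sym (und_adj A)"
  unfolding und_adj_def sym_def by auto

theorem mainTheorem16:
  fixes V :: "'a set" and A :: "('a \<times> 'a) set" and u v x :: 'a and s :: int
  assumes "digraph V A"
    and "u \<in> V" "v \<in> V" "x \<in> V"
    and "(u, v) \<notin> A"
    and "s = int (cost V A u) - int (cost V (insert (u, v) A) u)"
    and "s > int (card V) * int (gdist V A x u)"
  shows "int (cost V A x) - int (cost V (insert (x, v) A) x)
           \<ge> s - int (card V) * int (gdist V A x u)"
proof -
  define n where "n = card V"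
  define R where "R = und_adj A"
  define A1 where "A1 = insert (u,v) A"
  define A2 where "A2 = insert (x,v) A"
  define D where "D = gdist V A x u"
  have fV: "finite V" and AV: "A \<subseteq> V \<times> V" using assms(1) unfolding digraph_def by auto
  have A1V: "A1 \<subseteq> V \<times> V" and A2V: "A2 \<subseteq> V \<times> V" using AV assms(2-4) unfolding A1_def A2_def by auto
  have R1: "und_adj A1 = insert (u,v) (insert (v,u) R)" unfolding A1_def R_def by (rule und_ins)
  have R2: "und_adj A2 = insert (x,v) (insert (v,x) R)" unfolding A2_def R_def by (rule und_ins)
  have symR: "sym R" unfolding R_def by (rule sym_und)
  have mono: "gdist V A2 a b \<le> gdist V A a b" for a b
  proof (cases "\<exists>k. (a,b) \<in> R ^^ k")
    case True
    then obtain k where k: "(a,b) \<in> R ^^ k" by auto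
    have "(a,b) \<in> R ^^ gdist V A a b" using gd_reach[where A=A and V=V and a=a and b=b and k=k] k unfolding R_def by simp
    then have "(a,b) \<in> und_adj A2 ^^ gdist V A a b" using R2 rp_mono[of R "und_adj A2"] by auto
    then show ?thesis by (rule gd_le)
  next
    case False
    then show ?thesis using gd_unreach[where A=A and V=V and a=a and b=b] gd_bound[OF fV A2V] unfolding R_def by auto
  qed
  have key: "int (gdist V A u w) - int (gdist V A1 u w)
      \<le> int D + int (gdist V A x w) - int (gdist V A2 x w)" for w
  proof (cases "gdist V A u w \<le> gdist V A1 u w")
    case True then show ?thesis using mono[of x w] by auto
  next
    case False
    have "\<exists>k. (u,w) \<in> und_adj A1 ^^ k"
    proof (rule ccontr)
      assume "\<not> ?thesis"
      then have "gdist V A1 u w = n^2" using gd_unreach unfolding n_def by metis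
      then show False using False gd_bound[OF fV AV, of u w] unfolding n_def by auto
    qed
    then obtain k where "(u,w) \<in> und_adj A1 ^^ k" by auto
    then have k: "(u,w) \<in> insert (u,v) (insert (v,u) R) ^^ gdist V A1 u w"
      using gd_reach R1 by metis
    have nr: "\<not> (\<exists>j\<le>gdist V A1 u w. (u,w) \<in> R ^^ j)"
    proof
      assume "\<exists>j\<le>gdist V A1 u w. (u,w) \<in> R ^^ j"
      then obtain j where "j \<le> gdist V A1 u w" "(u,w) \<in> R ^^ j" by auto
      then show False using gd_le[where A=A and V=V and a=u and b=w and k=j] False unfolding R_def by auto
    qed
    from walk_split[OF k] nr obtain j where j: "j < gdist V A1 u w" "(v,w) \<in> R ^^ j"
      by (auto intro: less_imp_le)
    have "(v,w) \<in> und_adj A2 ^^ j"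
      using j(2) rp_mono[of R "und_adj A2"] R2 by auto
    moreover have "(x,v) \<in> und_adj A2" using R2 by auto
    ultimately have "(x,w) \<in> und_adj A2 ^^ Suc j" by (rule relpow_Suc_I2[rotated])
    then have d2: "gdist V A2 x w \<le> gdist V A1 u w" using gd_le j(1) by (meson Suc_leI le_trans)
    have tri: "gdist V A u w \<le> D + gdist V A x w"
    proof (cases "(\<exists>k. (x,u) \<in> R ^^ k) \<and> (\<exists>k. (x,w) \<in> R ^^ k)")
      case True
      then obtain k1 k2 where "(x,u) \<in> R ^^ k1" "(x,w) \<in> R ^^ k2" by auto
      then have "(x,u) \<in> R ^^ D" "(x,w) \<in> R ^^ gdist V A x w"
        unfolding D_def R_def by (auto intro: gd_reach)
      then have "(u,w) \<in> R ^^ (D + gdist V A x w)" using rp_sym[OF symR] rp_comp by metis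
      then show ?thesis using gd_le unfolding R_def by metis
    next
      case False
      then have "D = n^2 \<or> gdist V A x w = n^2" unfolding D_def n_def R_def using gd_unreach by metis
      then show ?thesis using gd_bound[OF fV AV, of u w] unfolding n_def by auto
    qed
    show ?thesis using d2 tri by linarith
  qed
  have "int (cost V A u) - int (cost V A1 u) = (\<Sum>w\<in>V. int (gdist V A u w) - int (gdist V A1 u w))"
    unfolding cost_def by (simp add: sum_subtractf)
  also have "\<dots> \<le> (\<Sum>w\<in>V. int D + int (gdist V A x w) - int (gdist V A2 x w))"
    by (rule sum_mono) (rule key)
  also have "\<dots> = int n * int D + (int (cost V A x) - int (cost V A2 x))"
    unfolding cost_def n_def by (simp add: sum_subtractf sum.distrib)
  finally show ?thesis using assms(6) unfolding A1_def A2_def D_def n_def by linarith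
qed

end
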